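(* Let $\mathbf A$ be the BBL transformation of a matrix Laurent polynomial of bandwidth $(p,q)$, and let $L\le R$ be finite integers with $R-L\ge\tau$ (non-empty bulk). Then: (i) $\mathbf P_{L,R}\ker\mathbf A\subseteq\mathcal M_{L,R}$; (ii) if the principal coefficients $a_{p'}$ and $a_{q'}$ are both invertible (i.e. $p\le 0\le q$ and $a_p,a_q$ invertible), then $\mathbf P_{L,R}\ker\mathbf A=\mathcal M_{L,R}$.
   Context: Fix $d\ge1$; $\mathbf M_d$ denotes complex $d\times d$ matrices. $\mathcal V^S_d$ is the vector space of all doubly infinite sequences $\Psi=\{\psi_j\}_{j\in\mathbb Z}$ with $\psi_j\in\mathbb C^d$ (no topology). A matrix Laurent polynomial of bandwidth $(p,q)$ is $A(w,w^{-1})=\sum_{r=p}^q a_rw^r$ with integers $p\le q$, $a_r\in\mathbf M_d$, $a_p\neq0\neq a_q$. Its banded block-Laurent (BBL) transformation $\mathbf A$ acts on $\mathcal V^S_d$ by $(\mathbf A\Psi)_j=\sum_{r=p}^q a_r\psi_{j+r}$. Put $p'=\min(p,0)$, $q'=\max(0,q)$, $\tau=q'-p'$. The principal coefficients are $a_{p'}$ (equal to $a_p$ if $p\le0$ and to $0$ if $p>0$) and $a_{q'}$ (equal to $a_q$ if $q\ge0$ and to $0$ if $q<0$). For $-\infty\le L\le R\le\infty$, $\mathcal V_{L,R}\subseteq\mathcal V^S_d$ is the subspace of sequences with $\psi_j=0$ whenever $j<L$ or $j>R$, and $\mathbf P_{L,R}$ is the projection of $\mathcal V^S_d$ onto $\mathcal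 V_{L,R}$ that replaces $\psi_j$ by $0$ for $j\notin[L,R]$. The bulk solution space is $\mathcal M_{L,R}=\ker\big(\mathbf P_{L-p',R-q'}\mathbf A|_{\mathcal V_{L,R}}\big)\subseteq\mathcal V_{L,R}$ (an infinite endpoint shifted by a finite amount stays infinite). For finite $L\le R$, $\mathcal V_{L,R}\cong\mathbb C^N\otimes\mathbb C^d$ with $N=R-L+1$, and $A_N=\mathbf P_{L,R}\mathbf A|_{\mathcal V_{L,R}}$ is the banded block-Toeplitz (BBT) matrix with blocks $[A_N]_{ij}=a_{j-i}$; with the bulk projector $P_B=\mathbf P_{L-p',R-q'}|_{\mathcal V_{L,R}}$ one has $\mathcal M_{L,R}=\ker P_BA_N$. *)

theory Defs
  imports "HOL-Analysis.Analysis"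
begin

text \<open>Block vectors in C^d are complex^'d, blocks in M_d are complex^'d^'d (d = CARD('d) \<ge> 1).
A matrix Laurent polynomial is given by its coefficient function a :: int \<Rightarrow> M_d, with
bandwidth (p,q): p \<le> q, a p \<noteq> 0, a q \<noteq> 0, and a r = 0 for r outside [p,q].\<close>

definition laurent_bandwidth :: "(int \<Rightarrow> complex^'d^'d) \<Rightarrow> int \<Rightarrow> int \<Rightarrow> bool" where
  "laurent_bandwidth a p q \<longleftrightarrow> p \<le> q \<and> a p \<noteq> 0 \<and> a q \<noteq> 0 \<and> (\<forall>r. r < p \<or> q < r \<longrightarrow> a r = 0)"

definition bbl :: "(int \<Rightarrow> complex^'d^'d) \<Rightarrow> int \<Rightarrow> int \<Rightarrow> (int \<Rightarrow> complex^'d) \<Rightarrow> (int \<Rightarrow> complex^'d)" where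
  "bbl a p q \<Psi> = (\<lambda>j. \<Sum>r=p..q. a r *v \<Psi> (j + r))"

definition seq_space :: "int \<Rightarrow> int \<Rightarrow> (int \<Rightarrow> complex^'d) set" where
  "seq_space L R = {\<Psi>. \<forall>j. j < L \<or> R < j \<longrightarrow> \<Psi> j = 0}"

definition proj :: "int \<Rightarrow> int \<Rightarrow> (int \<Rightarrow> complex^'d) \<Rightarrow> (int \<Rightarrow> complex^'d)" where
  "proj L R \<Psi> = (\<lambda>j. if L \<le> j \<and> j \<le> R then \<Psi> j else 0)"

definition bbl_kernel :: "(int \<Rightarrow> complex^'d^'d) \<Rightarrow> int \<Rightarrow> int \<Rightarrow> (int \<Rightarrow> complex^'d) set" where
  "bbl_kernel a p q = {\<Psi>. bbl a p q \<Psi> = (\<lambda>j. 0)}"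

text \<open>Bulk solution space M_{L,R} = ker (P_{L-p',R-q'} A restricted to V_{L,R}).\<close>
definition bulk_space :: "(int \<Rightarrow> complex^'d^'d) \<Rightarrow> int \<Rightarrow> int \<Rightarrow> int \<Rightarrow> int \<Rightarrow> (int \<Rightarrow> complex^'d) set" where
  "bulk_space a p q L R = {\<Psi> \<in> seq_space L R.
      proj (L - min p 0) (R - max 0 q) (bbl a p q \<Psi>) = (\<lambda>j. 0)}"

end

theory Submission
  imports Defs
begin

primrec ext :: "(int \<Rightarrow> complex^'d^'d) \<Rightarrow> int \<Rightarrow> int \<Rightarrow> int \<Rightarrow> int \<Rightarrow> complex^'d^'d \<Rightarrow> complex^'d^'d
   \<Rightarrow> (int \<Rightarrow> complex^'d) \<Rightarrow> nat \<Rightarrow> (int \<Rightarrow> complex^'d)" where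
  "ext a p q L R Bp Bq \<Phi> 0 = \<Phi>"
| "ext a p q L R Bp Bq \<Phi> (Suc n) =
     (ext a p q L R Bp Bq \<Phi> n)
       (R + 1 + int n := - (Bq *v (\<Sum>r=p..q-1. a r *v ext a p q L R Bp Bq \<Phi> n (R + 1 + int n - q + r))),
        L - 1 - int n := - (Bp *v (\<Sum>r=p+1..q. a r *v ext a p q L R Bp Bq \<Phi> n (L - 1 - int n - p + r))))"

lemma ext_stable:
  assumes "L \<le> R" "L - int n \<le> j" "j \<le> R + int n" "n \<le> m"
  shows "ext a p q L R Bp Bq \<Phi> m j = ext a p q L R Bp Bq \<Phi> n j"
  using assms(4)
proof (induction m)
  case 0 then show ?case by simp
next
  case (Suc m)
  show ?case
  proof (cases "n = Suc m")
    case True then show ?thesis by simp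
  next
    case False
    with Suc.prems have "n \<le> m" by simp
    with assms have "j \<noteq> R + 1 + int m" "j \<noteq> L - 1 - int m" by auto
    then show ?thesis using Suc.IH \<open>n \<le> m\<close> by simp
  qed
qed

lemma sum_split_top:
  fixes f :: "int \<Rightarrow> 'a::comm_monoid_add"
  assumes "p \<le> q" shows "(\<Sum>r=p..q. f r) = f q + (\<Sum>r=p..q-1. f r)"
proof -
  have "{p..q} = insert q {p..q-1}" using assms by auto
  then show ?thesis by simp
qed

lemma sum_split_bot:
  fixes f :: "int \<Rightarrow> 'a::comm_monoid_add"
  assumes "p \<le> q" shows "(\<Sum>r=p..q. f r) = f p + (\<Sum>r=p+1..q. f r)"
proof -
  have "{p..q} = insert p {p+1..q}" using assms by auto
  then show ?thesis by simp
qed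

lemma not_invertible_0: "\<not> invertible (0 :: complex^'d^'d)"
proof
  assume "invertible (0 :: complex^'d^'d)"
  then obtain B :: "complex^'d^'d" where "0 ** B = mat 1" unfolding invertible_def by blast
  then have "(mat 1 :: complex^'d^'d) = 0" by simp
  then have "(mat 1 :: complex^'d^'d) $ undefined $ undefined = 0" by simp
  then show False by (simp add: mat_def)
qed

lemma mv_uminus: "(A :: complex^'d^'d) *v (- x) = - (A *v x)"
  using matrix_vector_mult_diff_distrib[of A 0 x] by simp

theorem mainTheorem2:
  fixes a :: "int \<Rightarrow> complex^'d^'d" and p q L R :: int
  assumes "laurent_bandwidth a p q"
    and "L \<le> R"
    and "R - L \<ge> max 0 q - min p 0"
  shows "proj L R ` bbl_kernel a p q \<subseteq> bulk_space a p q L R \<and>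
         (invertible (a (min p 0)) \<and> invertible (a (max 0 q)) \<longrightarrow>
           proj L R ` bbl_kernel a p q = bulk_space a p q L R)"
proof -
  have pq: "p \<le> q" and out: "\<And>r. r < p \<or> q < r \<Longrightarrow> a r = 0"
    using assms(1) unfolding laurent_bandwidth_def by auto
  have part1: "proj L R ` bbl_kernel a p q \<subseteq> bulk_space a p q L R"
  proof
    fix \<Phi> assume "\<Phi> \<in> proj L R ` bbl_kernel a p q"
    then obtain \<Psi> where K: "bbl a p q \<Psi> = (\<lambda>j. 0)" and P: "\<Phi> = proj L R \<Psi>"
      unfolding bbl_kernel_def by auto
    have "\<Phi> \<in> seq_space L R" unfolding P seq_space_def proj_def by auto
    moreover have "proj (L - min p 0) (R - max 0 q) (bbl a p q \<Phi>) = (\<lambda>j. 0)"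
    proof
      fix j
      show "proj (L - min p 0) (R - max 0 q) (bbl a p q \<Phi>) j = 0"
      proof (cases "L - min p 0 \<le> j \<and> j \<le> R - max 0 q")
        case True
        have "bbl a p q \<Phi> j = bbl a p q \<Psi> j"
          unfolding bbl_def
        proof (rule sum.cong)
          fix r assume "r \<in> {p..q}"
          then have "L \<le> j + r \<and> j + r \<le> R" using True by auto
          then show "a r *v \<Phi> (j + r) = a r *v \<Psi> (j + r)" unfolding P proj_def by simp
        qed simp
        then show ?thesis using K True by (simp add: proj_def fun_eq_iff)
      next
        case False then show ?thesis by (auto simp: proj_def)
      qed
    qed
    ultimately show "\<Phi> \<in> bulk_space a p q L R" unfolding bulk_space_def by simp
  qed
  have part2: "proj L R ` bbl_kernel a p q = bulk_space a p q L R"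
    if invp: "invertible (a (min p 0))" and invq: "invertible (a (max 0 q))"
  proof -
    have p0: "p \<le> 0"
    proof (rule ccontr)
      assume "\<not> p \<le> 0"
      then have "a (min p 0) = 0" using out by simp
      then show False using invp not_invertible_0 by metis
    qed
    have q0: "0 \<le> q"
    proof (rule ccontr)
      assume "\<not> 0 \<le> q"
      then have "a (max 0 q) = 0" using out by simp
      then show False using invq not_invertible_0 by metis
    qed
    have mp: "min p 0 = p" and mq: "max 0 q = q" using p0 q0 by auto
    obtain Bp where Bp: "a p ** Bp = mat 1" using invp mp unfolding invertible_def by auto
    obtain Bq where Bq: "a q ** Bq = mat 1" using invq mq unfolding invertible_def by auto
    have RL: "R - L \<ge> q - p" using assms(3) mp mq by simp
    show ?thesis
    proof
      show "bulk_space a p q L R \<subseteq> proj L R ` bbl_kernel a p q"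
      proof
        fix \<Phi> assume B: "\<Phi> \<in> bulk_space a p q L R"
        have S: "\<And>j. j < L \<or> R < j \<Longrightarrow> \<Phi> j = 0"
          using B unfolding bulk_space_def seq_space_def by auto
        have Bu: "\<And>j. L - p \<le> j \<Longrightarrow> j \<le> R - q \<Longrightarrow> bbl a p q \<Phi> j = 0"
        proof -
          fix j assume "L - p \<le> j" "j \<le> R - q"
          then show "bbl a p q \<Phi> j = 0"
            using B mp mq unfolding bulk_space_def proj_def by (auto simp: fun_eq_iff dest: spec[of _ j])
        qed
        define G where "G = ext a p q L R Bp Bq \<Phi>"
        define N where "N = (\<lambda>j. nat (max (L - j) (j - R)))"
        define \<Psi> where "\<Psi> = (\<lambda>j. G (N j) j)"
        have st: "\<And>n m j. L - int n \<le> j \<Longrightarrow> j \<le> R + int n \<Longrightarrow> n \<le> m \<Longrightarrow> G m j = G n j"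
          unfolding G_def using ext_stable assms(2) by blast
        have PsiG: "\<Psi> j = G m j" if "N j \<le> m" for j m
        proof -
          have "L - int (N j) \<le> j" "j \<le> R + int (N j)" unfolding N_def by linarith+
          then show ?thesis unfolding \<Psi>_def using st[of "N j" j m] that by simp
        qed
        have G0: "G m j = \<Phi> j" if "L \<le> j" "j \<le> R" for m j
          using st[of 0 j m] that by (simp add: G_def)
        have ker: "bbl a p q \<Psi> j = 0" for j
        proof -
          define m where "m = nat (\<bar>j\<bar> + \<bar>p\<bar> + \<bar>q\<bar> + \<bar>L\<bar> + \<bar>R\<bar> + 1)"
          have PsiGm: "\<Psi> (j + r) = G m (j + r)" if "r \<in> {p..q}" for r
            using that by (intro PsiG) (auto simp: N_def m_def)
          have eq: "bbl a p q \<Psi> j = (\<Sum>r=p..q. a r *v G m (j + r))"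
            unfolding bbl_def using PsiGm by (intro sum.cong) auto
          consider (bulk) "L - p \<le> j \<and> j \<le> R - q" | (right) "R - q < j" | (left) "j < L - p"
            by linarith
          then show ?thesis
          proof cases
            case bulk
            have "(\<Sum>r=p..q. a r *v G m (j + r)) = bbl a p q \<Phi> j"
              unfolding bbl_def using bulk by (intro sum.cong) (auto intro!: arg_cong[where f="(*v) _"] G0)
            then show ?thesis using eq Bu bulk by simp
          next
            case right
            define n where "n = nat (j + q - R - 1)"
            have jn: "j + q = R + 1 + int n" using right unfolding n_def by simp
            have "m \<ge> Suc n" unfolding m_def n_def by auto
            then have "G m (j + q) = G (Suc n) (j + q)" using assms(2) by (intro st) (auto simp: jn)
            also have "\<dots> = - (Bq *v (\<Sum>r=p..q-1. a r *v G n (j + r)))"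
            proof -
              have ne: "j + q \<noteq> L - 1 - int n" using assms(2) jn by simp
              show ?thesis using ne by (simp add: G_def jn[symmetric])
            qed
            also have "(\<Sum>r=p..q-1. a r *v G n (j + r)) = (\<Sum>r=p..q-1. a r *v G m (j + r))"
            proof (intro sum.cong refl arg_cong[where f="(*v) _"])
              fix r assume "r \<in> {p..q-1}"
              then show "G n (j + r) = G m (j + r)" using right RL jn \<open>m \<ge> Suc n\<close>
                by (intro st[symmetric]) auto
            qed
            finally have gq: "a q *v G m (j + q) = - (\<Sum>r=p..q-1. a r *v G m (j + r))"
              by (simp add: mv_uminus matrix_vector_mul_assoc Bq)
            show ?thesis using eq sum_split_top[OF pq, of "\<lambda>r. a r *v G m (j + r)"] gq by simp
          next
            case left
            define n where "n = nat (L - 1 - j - p)"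
            have jn: "j + p = L - 1 - int n" using left unfolding n_def by simp
            have "m \<ge> Suc n" unfolding m_def n_def by auto
            then have "G m (j + p) = G (Suc n) (j + p)" using assms(2) by (intro st) (auto simp: jn)
            also have "\<dots> = - (Bp *v (\<Sum>r=p+1..q. a r *v G n (j + r)))"
              using assms(2) by (simp add: G_def jn[symmetric])
            also have "(\<Sum>r=p+1..q. a r *v G n (j + r)) = (\<Sum>r=p+1..q. a r *v G m (j + r))"
            proof (intro sum.cong refl arg_cong[where f="(*v) _"])
              fix r assume "r \<in> {p+1..q}"
              then show "G n (j + r) = G m (j + r)" using left RL jn \<open>m \<ge> Suc n\<close>
                by (intro st[symmetric]) auto
            qed
            finally have gp: "a p *v G m (j + p) = - (\<Sum>r=p+1..q. a r *v G m (j + r))"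
              by (simp add: mv_uminus matrix_vector_mul_assoc Bp)
            show ?thesis using eq sum_split_bot[OF pq, of "\<lambda>r. a r *v G m (j + r)"] gp by simp
          qed
        qed
        have "\<Psi> \<in> bbl_kernel a p q" unfolding bbl_kernel_def using ker by auto
        moreover have "proj L R \<Psi> = \<Phi>"
        proof
          fix j show "proj L R \<Psi> j = \<Phi> j"
          proof (cases "L \<le> j \<and> j \<le> R")
            case True
            then have "\<Psi> j = G 0 j" by (intro PsiG) (auto simp: N_def)
            then show ?thesis using True by (simp add: proj_def G_def)
          qed (auto simp: proj_def S)
        qed
        ultimately show "\<Phi> \<in> proj L R ` bbl_kernel a p q" by force
      qed
    qed (rule part1)
  qed
  show ?thesis using part1 part2 by blast
qed

end
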